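(* $\lambda_1^\kappa\to\lambda_1$ as $\kappa\to0$.
   Context: Let $l>0$ and $\Psi\in C^3([0,l])$ with $\Psi>0$ on $[0,l]$, $\Psi'(s)=\Psi'''(s)=0$ for $s\in\{0,l\}$, and $\Psi''\Psi-(\Psi')^2[1+(\Psi')^2]>0$ at some $s_0\in(0,l)$. Let $I=[0,l]\times S^1$. $D$ is the surface of revolution parametrized by $(s,\theta)\in I\mapsto(\Psi(s)\cos\theta,\Psi(s)\sin\theta,s)$, with metric $g=\mathrm{diag}(1+\Psi'(s)^2,\Psi(s)^2)$, area element $dV_g=\sqrt{|g|}\,ds\,d\theta$, gradient $\nabla_g$ and Laplace–Beltrami operator $\Delta_g$. For $\kappa\neq0$, $M_\kappa$ is the surface parametrized by $(s,\theta)\in I\mapsto\big(\tfrac1\kappa(1-\cos\kappa s)+\Psi(s)\cos\theta\cos\kappa s,\ \Psi(s)\sin\theta,\ \tfrac1\kappa\sin\kappa s-\Psi(s)\cos\theta\sin\kappa s\big)$, with metric $g^\kappa=\mathrm{diag}\big(\Psi'(s)^2+(\kappa\Psi(s)\cos\theta-1)^2,\Psi(s)^2\big)$, area element $dV_{g^\kappa}=\sqrt{|g^\kappa|}\,ds\,d\theta$, gradient $\nabla_{g^\kappa}$ and Laplace–Beltrami operator $\Delta_{g^\kappa}$; $\delta_0>0$ is such that for $0<|\kappa|\le\delta_0$, $M_\kappa$ is a properly embedded surface with boundary the circles $s=0,s=l$ and outward unit normal $\nu$. Functions on $D$, $M_\kappa$ are identified with functions on $I$. Bandle, Punzo and Tesei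 constructed $f\in C^1(\mathbb{R})$ and a pattern (stable nonconstant stationary solution) $U_g=U_g(s)$ of the Neumann problem $\partial_t u=\Delta_g u+f(u)$ in $D$, $\partial u/\partial\nu=0$ on $\partial D$; $f$, $U_g$ denote these, and $\lambda_1=\inf_{0\ne q\in H^1(D)}\frac{\int_D(|\nabla_g q|^2-f'(U_g)q^2)\,dV_g}{\int_D q^2\,dV_g}$ is the principal eigenvalue of the linearization at $U_g$ (it is positive for this pattern). Fix $0<\alpha<1$; $\delta_1\in(0,\delta_0)$ and, for $0<|\kappa|<\delta_1$, $U_\kappa$ is a stationary solution of the Neumann problem on $M_\kappa$ ($\Delta_{g^\kappa}U_\kappa+f(U_\kappa)=0$ in $M_\kappa$, $\partial U_\kappa/\partial\nu=0$ on $\partial M_\kappa$) with $\|U_\kappa-U_g\|_{C^{2,\alpha}(I)}<\epsilon_1(\kappa)$ where $\epsilon_1(\kappa)\to0$ as $\kappa\to0$. For such $\kappa$, $\lambda_1^\kappa=\inf_{0\ne q\in H^1(M_\kappa)}\frac{\int_{M_\kappa}(|\nabla_{g^\kappa}q|^2-f'(U_\kappa)q^2)\,dV_{g^\kappa}}{\int_{M_\kappa}q^2\,dV_{g^\kappa}}$ is the principal eigenvalue of the linearization at $U_\kappa$ on $M_\kappa$ with Neumann boundary condition. *)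

theory Defs
  imports "HOL-Analysis.Analysis"
begin

text \<open>Coordinates: a point of I = [0,l] x S^1 is represented by a pair (s,theta) of reals,
  functions on I are functions on the strip [0,l] x R which are 2pi-periodic in theta.\<close>

definition strip :: "real \<Rightarrow> (real \<times> real) set" where
  "strip l = {0..l} \<times> UNIV"

definition fund :: "real \<Rightarrow> (real \<times> real) set" where
  "fund l = {0..l} \<times> {0..2*pi}"

definition theta_periodic :: "(real \<times> real \<Rightarrow> 'a) \<Rightarrow> bool" where
  "theta_periodic u \<longleftrightarrow> (\<forall>s t. u (s, t + 2*pi) = u (s, t))"

definition D :: "real \<Rightarrow> (real \<times> real \<Rightarrow> real) \<Rightarrow> real \<times> real \<Rightarrow> real \<times> real \<Rightarrow> real" where
  "D l u x v = frechet_derivative u (at x within strip l) v"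

definition C2_on_I :: "real \<Rightarrow> (real \<times> real \<Rightarrow> real) \<Rightarrow> bool" where
  "C2_on_I l u \<longleftrightarrow> theta_periodic u \<and>
     (\<forall>x\<in>strip l. u differentiable (at x within strip l)) \<and>
     (\<forall>v. \<forall>x\<in>strip l. (\<lambda>y. D l u y v) differentiable (at x within strip l)) \<and>
     (\<forall>v w. continuous_on (strip l) (\<lambda>x. D l (\<lambda>y. D l u y v) x w))"

definition basis2 :: "(real \<times> real) set" where
  "basis2 = {(1,0), (0,1)}"

definition hoelder_quot :: "real \<Rightarrow> real \<Rightarrow> (real \<times> real \<Rightarrow> real) \<Rightarrow> real set" where
  "hoelder_quot l \<alpha> h = {\<bar>h x - h y\<bar> / (dist x y powr \<alpha>) | x y. x \<in> strip l \<and> y \<in> strip l \<and> x \<noteq> y}"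

definition C2a :: "real \<Rightarrow> real \<Rightarrow> (real \<times> real \<Rightarrow> real) \<Rightarrow> bool" where
  "C2a l \<alpha> u \<longleftrightarrow> C2_on_I l u \<and> bounded (u ` strip l) \<and>
     (\<forall>v\<in>basis2. bounded ((\<lambda>x. D l u x v) ` strip l)) \<and>
     (\<forall>v\<in>basis2. \<forall>w\<in>basis2. bounded ((\<lambda>x. D l (\<lambda>y. D l u y v) x w) ` strip l)) \<and>
     (\<forall>v\<in>basis2. \<forall>w\<in>basis2. bdd_above (hoelder_quot l \<alpha> (\<lambda>x. D l (\<lambda>y. D l u y v) x w)))"

definition C2a_norm :: "real \<Rightarrow> real \<Rightarrow> (real \<times> real \<Rightarrow> real) \<Rightarrow> real" where
  "C2a_norm l \<alpha> u =
     (SUP x\<in>strip l. \<bar>u x\<bar>)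
     + (\<Sum>v\<in>basis2. SUP x\<in>strip l. \<bar>D l u x v\<bar>)
     + (\<Sum>v\<in>basis2. \<Sum>w\<in>basis2. SUP x\<in>strip l. \<bar>D l (\<lambda>y. D l u y v) x w\<bar>)
     + (\<Sum>v\<in>basis2. \<Sum>w\<in>basis2. Sup (hoelder_quot l \<alpha> (\<lambda>x. D l (\<lambda>y. D l u y v) x w)))"

text \<open>Diagonal metrics diag(g11,g22) in the coordinates (s,theta).\<close>
definition gD11 :: "(real \<Rightarrow> real) \<Rightarrow> real \<times> real \<Rightarrow> real" where
  "gD11 \<Psi>' x = 1 + (\<Psi>' (fst x))\<^sup>2"

definition g22 :: "(real \<Rightarrow> real) \<Rightarrow> real \<times> real \<Rightarrow> real" where
  "g22 \<Psi> x = (\<Psi> (fst x))\<^sup>2"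

definition gK11 :: "(real \<Rightarrow> real) \<Rightarrow> (real \<Rightarrow> real) \<Rightarrow> real \<Rightarrow> real \<times> real \<Rightarrow> real" where
  "gK11 \<Psi> \<Psi>' \<kappa> x = (\<Psi>' (fst x))\<^sup>2 + (\<kappa> * \<Psi> (fst x) * cos (snd x) - 1)\<^sup>2"

definition vol :: "(real \<times> real \<Rightarrow> real) \<Rightarrow> (real \<times> real \<Rightarrow> real) \<Rightarrow> real \<times> real \<Rightarrow> real" where
  "vol a b x = sqrt (a x * b x)"

definition LB :: "real \<Rightarrow> (real \<times> real \<Rightarrow> real) \<Rightarrow> (real \<times> real \<Rightarrow> real) \<Rightarrow> (real \<times> real \<Rightarrow> real) \<Rightarrow> real \<times> real \<Rightarrow> real" where
  "LB l a b u x = (1 / vol a b x) *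
     (D l (\<lambda>y. vol a b y / a y * D l u y (1,0)) x (1,0)
      + D l (\<lambda>y. vol a b y / b y * D l u y (0,1)) x (0,1))"

text \<open>Derivative along the outward unit normal at the boundary circles s = 0, s = l:
  nu = -(1/sqrt a) d_s at s = 0 and nu = (1/sqrt a) d_s at s = l.\<close>
definition normal_deriv :: "real \<Rightarrow> (real \<times> real \<Rightarrow> real) \<Rightarrow> (real \<times> real \<Rightarrow> real) \<Rightarrow> real \<times> real \<Rightarrow> real" where
  "normal_deriv l a u x = (if fst x = 0 then -1 else 1) * D l u x (1,0) / sqrt (a x)"

definition stationary_neumann ::
  "real \<Rightarrow> (real \<times> real \<Rightarrow> real) \<Rightarrow> (real \<times> real \<Rightarrow> real) \<Rightarrow> (real \<Rightarrow> real) \<Rightarrow> (real \<times> real \<Rightarrow> real) \<Rightarrow> bool" where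
  "stationary_neumann l a b f u \<longleftrightarrow> C2_on_I l u \<and>
     (\<forall>x\<in>strip l. LB l a b u x + f (u x) = 0) \<and>
     (\<forall>t. normal_deriv l a u (0, t) = 0 \<and> normal_deriv l a u (l, t) = 0)"

definition test_fun :: "real \<Rightarrow> (real \<times> real \<Rightarrow> real) \<Rightarrow> (real \<times> real \<Rightarrow> real) \<Rightarrow> (real \<times> real \<Rightarrow> real) \<Rightarrow> bool" where
  "test_fun l \<phi> ps pt \<longleftrightarrow>
     (\<forall>x. (\<phi> has_derivative (\<lambda>h. fst h * ps x + snd h * pt x)) (at x)) \<and>
     continuous_on UNIV ps \<and> continuous_on UNIV pt \<and>
     (\<exists>K. compact K \<and> K \<subseteq> {0<..<l} \<times> UNIV \<and> (\<forall>x. x \<notin> K \<longrightarrow> \<phi> x = 0))"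

definition weak_grad :: "real \<Rightarrow> (real \<times> real \<Rightarrow> real) \<Rightarrow> (real \<times> real \<Rightarrow> real) \<Rightarrow> (real \<times> real \<Rightarrow> real) \<Rightarrow> bool" where
  "weak_grad l q g1 g2 \<longleftrightarrow> (\<forall>\<phi> ps pt. test_fun l \<phi> ps pt \<longrightarrow>
     (\<integral>x. q x * ps x \<partial>lborel) = - (\<integral>x. g1 x * \<phi> x \<partial>lborel) \<and>
     (\<integral>x. q x * pt x \<partial>lborel) = - (\<integral>x. g2 x * \<phi> x \<partial>lborel))"

definition grad_sq :: "(real \<times> real \<Rightarrow> real) \<Rightarrow> (real \<times> real \<Rightarrow> real) \<Rightarrow> (real \<times> real \<Rightarrow> real) \<Rightarrow> (real \<times> real \<Rightarrow> real) \<Rightarrow> real \<times> real \<Rightarrow> real" where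
  "grad_sq a b g1 g2 x = (g1 x)\<^sup>2 / a x + (g2 x)\<^sup>2 / b x"

definition H1 :: "real \<Rightarrow> (real \<times> real \<Rightarrow> real) \<Rightarrow> (real \<times> real \<Rightarrow> real) \<Rightarrow> (real \<times> real \<Rightarrow> real) \<Rightarrow> (real \<times> real \<Rightarrow> real) \<Rightarrow> (real \<times> real \<Rightarrow> real) \<Rightarrow> bool" where
  "H1 l a b q g1 g2 \<longleftrightarrow>
     q \<in> borel_measurable lborel \<and> g1 \<in> borel_measurable lborel \<and> g2 \<in> borel_measurable lborel \<and>
     theta_periodic q \<and>
     set_integrable lborel (fund l) (\<lambda>x. (q x)\<^sup>2 * vol a b x) \<and>
     set_integrable lborel (fund l) (\<lambda>x. grad_sq a b g1 g2 x * vol a b x) \<and>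
     weak_grad l q g1 g2"

definition rayleigh_set :: "real \<Rightarrow> (real \<times> real \<Rightarrow> real) \<Rightarrow> (real \<times> real \<Rightarrow> real) \<Rightarrow> (real \<times> real \<Rightarrow> real) \<Rightarrow> real set" where
  "rayleigh_set l a b V =
     {(LINT x:fund l|lborel. (grad_sq a b g1 g2 x - V x * (q x)\<^sup>2) * vol a b x)
        / (LINT x:fund l|lborel. (q x)\<^sup>2 * vol a b x) | q g1 g2.
        H1 l a b q g1 g2 \<and> (LINT x:fund l|lborel. (q x)\<^sup>2 * vol a b x) \<noteq> 0}"

definition principal_eig :: "real \<Rightarrow> (real \<times> real \<Rightarrow> real) \<Rightarrow> (real \<times> real \<Rightarrow> real) \<Rightarrow> (real \<times> real \<Rightarrow> real) \<Rightarrow> real" where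
  "principal_eig l a b V = Inf (rayleigh_set l a b V)"

definition Mpar :: "(real \<Rightarrow> real) \<Rightarrow> real \<Rightarrow> real \<times> real \<Rightarrow> real \<times> real \<times> real" where
  "Mpar \<Psi> \<kappa> x =
     ((1 / \<kappa>) * (1 - cos (\<kappa> * fst x)) + \<Psi> (fst x) * cos (snd x) * cos (\<kappa> * fst x),
      \<Psi> (fst x) * sin (snd x),
      (1 / \<kappa>) * sin (\<kappa> * fst x) - \<Psi> (fst x) * cos (snd x) * sin (\<kappa> * fst x))"

end

theory Submission
  imports Defs "HOL-Analysis.Analysis"
begin


lemma fund_borel: "fund l \<in> sets borel"
  unfolding fund_def by (intro borel_closed closed_Times closed_atLeastAtMost)

lemma meas_helper:
  fixes u c :: "real \<times> real \<Rightarrow> real"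
  assumes "u \<in> borel_measurable lborel" "continuous_on A c" "A \<in> sets borel"
  shows "(\<lambda>x. indicator A x * (u x * c x)) \<in> borel_measurable lborel"
proof -
  have "(\<lambda>x. indicator A x *\<^sub>R c x) \<in> borel_measurable borel"
    by (rule borel_measurable_continuous_on_indicator[OF assms(3,2)])
  then have m: "(\<lambda>x. indicator A x * c x) \<in> borel_measurable borel" by simp
  have u: "u \<in> borel_measurable borel" using assms(1) by simp
  have "(\<lambda>x. u x * (indicator A x * c x)) \<in> borel_measurable borel"
    using u m by measurable
  moreover have "(\<lambda>x. indicator A x * (u x * c x)) = (\<lambda>x. u x * (indicator A x * c x))"
    by (auto simp: indicator_def)
  ultimately show ?thesis by simp
qed

lemma si_bound:
  fixes f g :: "real \<times> real \<Rightarrow> real"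
  assumes "set_integrable lborel A f" "(\<lambda>x. indicator A x * g x) \<in> borel_measurable lborel"
    "\<forall>x\<in>A. \<bar>g x\<bar> \<le> \<bar>f x\<bar>"
  shows "set_integrable lborel A g"
  unfolding set_integrable_def
proof (rule Bochner_Integration.integrable_bound)
  show "integrable lborel (\<lambda>x. indicator A x *\<^sub>R f x)" using assms(1) by (simp add: set_integrable_def)
  show "(\<lambda>x. indicator A x *\<^sub>R g x) \<in> borel_measurable lborel" using assms(2) by simp
  show "AE x in lborel. norm (indicator A x *\<^sub>R g x) \<le> norm (indicator A x *\<^sub>R f x)"
    using assms(3) by (auto simp: indicator_def)
qed

lemma set_int_nonneg:
  fixes f :: "real \<times> real \<Rightarrow> real"
  assumes "\<forall>x\<in>A. 0 \<le> f x"
  shows "0 \<le> (LINT x:A|lborel. f x)"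
  unfolding set_lebesgue_integral_def
  by (rule Bochner_Integration.integral_nonneg) (use assms in \<open>auto simp: indicator_def\<close>)


definition cmp :: "real \<Rightarrow> (real \<times> real \<Rightarrow> real) \<Rightarrow> (real \<times> real \<Rightarrow> real) \<Rightarrow> (real \<times> real \<Rightarrow> real) \<Rightarrow> real \<Rightarrow> bool" where
  "cmp l a0 a1 b s \<longleftrightarrow> (\<forall>x\<in>fund l. 0 < a0 x \<and> 0 < a1 x \<and> 0 < b x \<and>
     vol a1 b x \<le> s * vol a0 b x \<and> vol a1 b x / a1 x \<le> s * (vol a0 b x / a0 x))"

lemma grad_vol_eq: "grad_sq a b g1 g2 x * vol a b x = (g1 x)\<^sup>2 * (vol a b x / a x) + (g2 x)\<^sup>2 * (vol a b x / b x)"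
  unfolding grad_sq_def by (simp add: algebra_simps)

lemma cont_vol:
  assumes "continuous_on A a" "continuous_on A b"
  shows "continuous_on A (vol a b)"
  unfolding vol_def[abs_def] by (intro continuous_intros assms)

lemma cont_vol_div:
  assumes "continuous_on A a" "continuous_on A b" "continuous_on A c" "\<forall>x\<in>A. c x \<noteq> 0"
  shows "continuous_on A (\<lambda>x. vol a b x / c x)"
  using assms by (auto intro!: continuous_intros cont_vol)

lemma meas_grad:
  assumes "g1 \<in> borel_measurable lborel" "g2 \<in> borel_measurable lborel"
    "continuous_on (fund l) a" "continuous_on (fund l) b" "\<forall>x\<in>fund l. 0 < a x \<and> 0 < b x"
  shows "(\<lambda>x. indicator (fund l) x * (grad_sq a b g1 g2 x * vol a b x)) \<in> borel_measurable lborel"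
proof -
  have c1: "continuous_on (fund l) (\<lambda>x. vol a b x / a x)"
    by (rule cont_vol_div) (use assms in auto)
  have c2: "continuous_on (fund l) (\<lambda>x. vol a b x / b x)"
    by (rule cont_vol_div) (use assms in auto)
  have m1: "(\<lambda>x. indicator (fund l) x * ((g1 x)\<^sup>2 * (vol a b x / a x))) \<in> borel_measurable lborel"
    by (rule meas_helper[OF _ c1 fund_borel]) (use assms(1) in simp)
  have m2: "(\<lambda>x. indicator (fund l) x * ((g2 x)\<^sup>2 * (vol a b x / b x))) \<in> borel_measurable lborel"
    by (rule meas_helper[OF _ c2 fund_borel]) (use assms(2) in simp)
  have "(\<lambda>x. indicator (fund l) x * ((g1 x)\<^sup>2 * (vol a b x / a x)) + indicator (fund l) x * ((g2 x)\<^sup>2 * (vol a b x / b x))) \<in> borel_measurable lborel"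
    using m1 m2 by simp
  then show ?thesis by (simp add: grad_vol_eq distrib_left)
qed

lemma meas_q:
  fixes q c :: "real \<times> real \<Rightarrow> real"
  assumes "q \<in> borel_measurable lborel" "continuous_on (fund l) c"
  shows "(\<lambda>x. indicator (fund l) x * ((q x)\<^sup>2 * c x)) \<in> borel_measurable lborel"
  by (rule meas_helper[of "\<lambda>x. (q x)\<^sup>2" "fund l" c, OF _ assms(2) fund_borel]) (use assms(1) in simp)

lemma vol_nonneg:
  fixes a b :: "real \<times> real \<Rightarrow> real"
  assumes "0 < a x" "0 < b x" shows "0 \<le> vol a b x" unfolding vol_def using assms by simp

lemma grad_vol_nonneg:
  fixes a b g1 g2 :: "real \<times> real \<Rightarrow> real"
  assumes "0 < a x" "0 < b x"
  shows "0 \<le> grad_sq a b g1 g2 x * vol a b x"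
  unfolding grad_vol_eq using assms vol_nonneg[where a=a and b=b and x=x, OF assms] by (intro add_nonneg_nonneg mult_nonneg_nonneg) auto

lemma transfer:
  assumes ca0: "continuous_on (fund l) a0" and ca1: "continuous_on (fund l) a1"
    and cb: "continuous_on (fund l) b"
    and cm: "cmp l a0 a1 b s" and s: "0 \<le> s"
    and H: "H1 l a0 b q g1 g2"
  shows "H1 l a1 b q g1 g2"
    "(LINT x:fund l|lborel. (q x)\<^sup>2 * vol a1 b x) \<le> s * (LINT x:fund l|lborel. (q x)\<^sup>2 * vol a0 b x)"
    "(LINT x:fund l|lborel. grad_sq a1 b g1 g2 x * vol a1 b x) \<le> s * (LINT x:fund l|lborel. grad_sq a0 b g1 g2 x * vol a0 b x)"
proof -
  have qm: "q \<in> borel_measurable lborel" and g1m: "g1 \<in> borel_measurable lborel"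
    and g2m: "g2 \<in> borel_measurable lborel" and iq0: "set_integrable lborel (fund l) (\<lambda>x. (q x)\<^sup>2 * vol a0 b x)"
    and ig0: "set_integrable lborel (fund l) (\<lambda>x. grad_sq a0 b g1 g2 x * vol a0 b x)"
    using H unfolding H1_def by auto
  have pos: "\<forall>x\<in>fund l. 0 < a0 x \<and> 0 < a1 x \<and> 0 < b x" using cm unfolding cmp_def by auto
  have iq0s: "set_integrable lborel (fund l) (\<lambda>x. s * ((q x)\<^sup>2 * vol a0 b x))"
    using iq0 by simp
  have ig0s: "set_integrable lborel (fund l) (\<lambda>x. s * (grad_sq a0 b g1 g2 x * vol a0 b x))"
    using ig0 by simp
  have pq: "\<forall>x\<in>fund l. (q x)\<^sup>2 * vol a1 b x \<le> s * ((q x)\<^sup>2 * vol a0 b x)"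
  proof
    fix x assume x: "x \<in> fund l"
    then have "vol a1 b x \<le> s * vol a0 b x" using cm unfolding cmp_def by auto
    then show "(q x)\<^sup>2 * vol a1 b x \<le> s * ((q x)\<^sup>2 * vol a0 b x)"
      using mult_left_mono[of "vol a1 b x" "s * vol a0 b x" "(q x)\<^sup>2"] by (simp add: algebra_simps)
  qed
  have pg: "\<forall>x\<in>fund l. grad_sq a1 b g1 g2 x * vol a1 b x \<le> s * (grad_sq a0 b g1 g2 x * vol a0 b x)"
  proof
    fix x assume x: "x \<in> fund l"
    then have h1: "vol a1 b x \<le> s * vol a0 b x" and h2: "vol a1 b x / a1 x \<le> s * (vol a0 b x / a0 x)"
      and bp: "0 < b x" using cm unfolding cmp_def by auto
    have h3: "vol a1 b x / b x \<le> s * (vol a0 b x / b x)"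
      using h1 bp by (simp add: divide_right_mono)
    have "(g1 x)\<^sup>2 * (vol a1 b x / a1 x) \<le> (g1 x)\<^sup>2 * (s * (vol a0 b x / a0 x))"
      using mult_left_mono[OF h2, of "(g1 x)\<^sup>2"] by simp
    moreover have "(g2 x)\<^sup>2 * (vol a1 b x / b x) \<le> (g2 x)\<^sup>2 * (s * (vol a0 b x / b x))"
      using mult_left_mono[OF h3, of "(g2 x)\<^sup>2"] by simp
    ultimately show "grad_sq a1 b g1 g2 x * vol a1 b x \<le> s * (grad_sq a0 b g1 g2 x * vol a0 b x)"
      unfolding grad_vol_eq by (simp add: algebra_simps)
  qed
  have iq1: "set_integrable lborel (fund l) (\<lambda>x. (q x)\<^sup>2 * vol a1 b x)"
  proof (rule si_bound[OF iq0s])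
    show "(\<lambda>x. indicator (fund l) x * ((q x)\<^sup>2 * vol a1 b x)) \<in> borel_measurable lborel"
      by (rule meas_q[OF qm cont_vol[OF ca1 cb]])
    show "\<forall>x\<in>fund l. \<bar>(q x)\<^sup>2 * vol a1 b x\<bar> \<le> \<bar>s * ((q x)\<^sup>2 * vol a0 b x)\<bar>"
    proof
      fix x assume x: "x \<in> fund l"
      have "0 \<le> vol a1 b x" using pos x vol_nonneg by blast
      then have "0 \<le> (q x)\<^sup>2 * vol a1 b x" by simp
      moreover have "(q x)\<^sup>2 * vol a1 b x \<le> s * ((q x)\<^sup>2 * vol a0 b x)" using pq x by blast
      ultimately show "\<bar>(q x)\<^sup>2 * vol a1 b x\<bar> \<le> \<bar>s * ((q x)\<^sup>2 * vol a0 b x)\<bar>"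
        by linarith
    qed
  qed
  have ig1: "set_integrable lborel (fund l) (\<lambda>x. grad_sq a1 b g1 g2 x * vol a1 b x)"
  proof (rule si_bound[OF ig0s])
    show "(\<lambda>x. indicator (fund l) x * (grad_sq a1 b g1 g2 x * vol a1 b x)) \<in> borel_measurable lborel"
      by (rule meas_grad[OF g1m g2m ca1 cb]) (use pos in auto)
    show "\<forall>x\<in>fund l. \<bar>grad_sq a1 b g1 g2 x * vol a1 b x\<bar> \<le> \<bar>s * (grad_sq a0 b g1 g2 x * vol a0 b x)\<bar>"
    proof
      fix x assume x: "x \<in> fund l"
      have "0 \<le> grad_sq a1 b g1 g2 x * vol a1 b x"
        using pos x grad_vol_nonneg[where a=a1 and b=b and x=x] by blast
      moreover have "grad_sq a1 b g1 g2 x * vol a1 b x \<le> s * (grad_sq a0 b g1 g2 x * vol a0 b x)" using pg x by blast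
      ultimately show "\<bar>grad_sq a1 b g1 g2 x * vol a1 b x\<bar> \<le> \<bar>s * (grad_sq a0 b g1 g2 x * vol a0 b x)\<bar>"
        by linarith
    qed
  qed
  show "H1 l a1 b q g1 g2" using H iq1 ig1 unfolding H1_def by auto
  have "(LINT x:fund l|lborel. (q x)\<^sup>2 * vol a1 b x) \<le> (LINT x:fund l|lborel. s * ((q x)\<^sup>2 * vol a0 b x))"
    by (rule set_integral_mono[OF iq1 iq0s]) (use pq in auto)
  then show "(LINT x:fund l|lborel. (q x)\<^sup>2 * vol a1 b x) \<le> s * (LINT x:fund l|lborel. (q x)\<^sup>2 * vol a0 b x)"
    by simp
  have "(LINT x:fund l|lborel. grad_sq a1 b g1 g2 x * vol a1 b x) \<le> (LINT x:fund l|lborel. s * (grad_sq a0 b g1 g2 x * vol a0 b x))"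
    by (rule set_integral_mono[OF ig1 ig0s]) (use pg in auto)
  then show "(LINT x:fund l|lborel. grad_sq a1 b g1 g2 x * vol a1 b x) \<le> s * (LINT x:fund l|lborel. grad_sq a0 b g1 g2 x * vol a0 b x)"
    by simp
qed


lemma vterm:
  fixes a b V q :: "real \<times> real \<Rightarrow> real"
  assumes H: "H1 l a b q g1 g2" and ca: "continuous_on (fund l) a" and cb: "continuous_on (fund l) b"
    and cV: "continuous_on (fund l) V" and pos: "\<forall>x\<in>fund l. 0 < a x \<and> 0 < b x"
    and C: "\<forall>x\<in>fund l. \<bar>V x\<bar> \<le> C"
  shows "set_integrable lborel (fund l) (\<lambda>x. V x * ((q x)\<^sup>2 * vol a b x))"
proof -
  have qm: "q \<in> borel_measurable lborel" and iq: "set_integrable lborel (fund l) (\<lambda>x. (q x)\<^sup>2 * vol a b x)"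
    using H unfolding H1_def by auto
  have iqC: "set_integrable lborel (fund l) (\<lambda>x. C * ((q x)\<^sup>2 * vol a b x))" using iq by simp
  show ?thesis
  proof (rule si_bound[OF iqC])
    have "(\<lambda>x. indicator (fund l) x * ((q x)\<^sup>2 * (V x * vol a b x))) \<in> borel_measurable lborel"
      by (rule meas_q[OF qm]) (intro continuous_intros cV cont_vol ca cb)
    then show "(\<lambda>x. indicator (fund l) x * (V x * ((q x)\<^sup>2 * vol a b x))) \<in> borel_measurable lborel"
      by (simp add: algebra_simps)
    show "\<forall>x\<in>fund l. \<bar>V x * ((q x)\<^sup>2 * vol a b x)\<bar> \<le> \<bar>C * ((q x)\<^sup>2 * vol a b x)\<bar>"
    proof
      fix x assume x: "x \<in> fund l"
      have v: "0 \<le> (q x)\<^sup>2 * vol a b x" using vol_nonneg[where a=a and b=b and x=x] pos x by simp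
      have "\<bar>V x\<bar> * ((q x)\<^sup>2 * vol a b x) \<le> \<bar>C\<bar> * ((q x)\<^sup>2 * vol a b x)"
        using C x v by (intro mult_right_mono) auto
      then show "\<bar>V x * ((q x)\<^sup>2 * vol a b x)\<bar> \<le> \<bar>C * ((q x)\<^sup>2 * vol a b x)\<bar>"
        using v by (metis abs_mult abs_of_nonneg)
    qed
  qed
qed

lemma quot_split:
  fixes a b V q :: "real \<times> real \<Rightarrow> real"
  assumes H: "H1 l a b q g1 g2" and iv: "set_integrable lborel (fund l) (\<lambda>x. V x * ((q x)\<^sup>2 * vol a b x))"
  shows "(LINT x:fund l|lborel. (grad_sq a b g1 g2 x - V x * (q x)\<^sup>2) * vol a b x)
       + C * (LINT x:fund l|lborel. (q x)\<^sup>2 * vol a b x)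
     = (LINT x:fund l|lborel. grad_sq a b g1 g2 x * vol a b x)
       + (LINT x:fund l|lborel. C * ((q x)\<^sup>2 * vol a b x) - V x * ((q x)\<^sup>2 * vol a b x))"
proof -
  have iq: "set_integrable lborel (fund l) (\<lambda>x. (q x)\<^sup>2 * vol a b x)"
    and ig: "set_integrable lborel (fund l) (\<lambda>x. grad_sq a b g1 g2 x * vol a b x)"
    using H unfolding H1_def by auto
  have iqC: "set_integrable lborel (fund l) (\<lambda>x. C * ((q x)\<^sup>2 * vol a b x))" using iq by simp
  have e1: "(LINT x:fund l|lborel. (grad_sq a b g1 g2 x - V x * (q x)\<^sup>2) * vol a b x)
     = (LINT x:fund l|lborel. grad_sq a b g1 g2 x * vol a b x - V x * ((q x)\<^sup>2 * vol a b x))"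
    by (simp add: algebra_simps)
  also have "\<dots> = (LINT x:fund l|lborel. grad_sq a b g1 g2 x * vol a b x) - (LINT x:fund l|lborel. V x * ((q x)\<^sup>2 * vol a b x))"
    by (rule set_integral_diff(2)[OF ig iv])
  finally have A: "(LINT x:fund l|lborel. (grad_sq a b g1 g2 x - V x * (q x)\<^sup>2) * vol a b x) =
     (LINT x:fund l|lborel. grad_sq a b g1 g2 x * vol a b x) - (LINT x:fund l|lborel. V x * ((q x)\<^sup>2 * vol a b x))" .
  have B: "(LINT x:fund l|lborel. C * ((q x)\<^sup>2 * vol a b x) - V x * ((q x)\<^sup>2 * vol a b x))
     = C * (LINT x:fund l|lborel. (q x)\<^sup>2 * vol a b x) - (LINT x:fund l|lborel. V x * ((q x)\<^sup>2 * vol a b x))"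
    using set_integral_diff(2)[OF iqC iv] by simp
  show ?thesis using A B by simp
qed


lemma cmp_quot:
  fixes a0 a1 b V0 V1 q g1 g2 :: "real \<times> real \<Rightarrow> real"
  assumes ca0: "continuous_on (fund l) a0" and ca1: "continuous_on (fund l) a1"
    and cb: "continuous_on (fund l) b" and cV0: "continuous_on (fund l) V0" and cV1: "continuous_on (fund l) V1"
    and c01: "cmp l a0 a1 b s" and c10: "cmp l a1 a0 b s" and s: "1 \<le> s" and eta: "0 \<le> \<eta>" "\<eta> \<le> 1"
    and VV: "\<forall>x\<in>fund l. \<bar>V1 x - V0 x\<bar> \<le> \<eta> \<and> \<bar>V0 x\<bar> + 1 \<le> C"
    and H: "H1 l a0 b q g1 g2" and M0: "(LINT x:fund l|lborel. (q x)\<^sup>2 * vol a0 b x) \<noteq> 0"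
  shows "H1 l a1 b q g1 g2" "(LINT x:fund l|lborel. (q x)\<^sup>2 * vol a1 b x) \<noteq> 0"
    "0 \<le> (LINT x:fund l|lborel. (grad_sq a0 b g1 g2 x - V0 x * (q x)\<^sup>2) * vol a0 b x)
        / (LINT x:fund l|lborel. (q x)\<^sup>2 * vol a0 b x) + C"
    "(1 - \<eta>) / s\<^sup>2 * ((LINT x:fund l|lborel. (grad_sq a0 b g1 g2 x - V0 x * (q x)\<^sup>2) * vol a0 b x)
        / (LINT x:fund l|lborel. (q x)\<^sup>2 * vol a0 b x) + C)
     \<le> (LINT x:fund l|lborel. (grad_sq a1 b g1 g2 x - V1 x * (q x)\<^sup>2) * vol a1 b x)
        / (LINT x:fund l|lborel. (q x)\<^sup>2 * vol a1 b x) + C"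
    "(LINT x:fund l|lborel. (grad_sq a1 b g1 g2 x - V1 x * (q x)\<^sup>2) * vol a1 b x)
        / (LINT x:fund l|lborel. (q x)\<^sup>2 * vol a1 b x) + C
     \<le> s\<^sup>2 * (1 + \<eta>) * ((LINT x:fund l|lborel. (grad_sq a0 b g1 g2 x - V0 x * (q x)\<^sup>2) * vol a0 b x)
        / (LINT x:fund l|lborel. (q x)\<^sup>2 * vol a0 b x) + C)"
proof -
  have s0: "0 \<le> s" using s by simp
  have pos: "\<forall>x\<in>fund l. 0 < a0 x \<and> 0 < a1 x \<and> 0 < b x" using c01 unfolding cmp_def by auto
  show H1': "H1 l a1 b q g1 g2" by (rule transfer(1)[OF ca0 ca1 cb c01 s0 H])
  define M0 where "M0 = (LINT x:fund l|lborel. (q x)\<^sup>2 * vol a0 b x)"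
  define M1 where "M1 = (LINT x:fund l|lborel. (q x)\<^sup>2 * vol a1 b x)"
  define G0 where "G0 = (LINT x:fund l|lborel. grad_sq a0 b g1 g2 x * vol a0 b x)"
  define G1 where "G1 = (LINT x:fund l|lborel. grad_sq a1 b g1 g2 x * vol a1 b x)"
  define R0 where "R0 = (LINT x:fund l|lborel. C * ((q x)\<^sup>2 * vol a0 b x) - V0 x * ((q x)\<^sup>2 * vol a0 b x))"
  define R1 where "R1 = (LINT x:fund l|lborel. C * ((q x)\<^sup>2 * vol a1 b x) - V1 x * ((q x)\<^sup>2 * vol a1 b x))"
  define N0 where "N0 = (LINT x:fund l|lborel. (grad_sq a0 b g1 g2 x - V0 x * (q x)\<^sup>2) * vol a0 b x)"
  define N1 where "N1 = (LINT x:fund l|lborel. (grad_sq a1 b g1 g2 x - V1 x * (q x)\<^sup>2) * vol a1 b x)"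
  have M1le: "M1 \<le> s * M0" unfolding M1_def M0_def by (rule transfer(2)[OF ca0 ca1 cb c01 s0 H])
  have M0le: "M0 \<le> s * M1" unfolding M1_def M0_def by (rule transfer(2)[OF ca1 ca0 cb c10 s0 H1'])
  have G1le: "G1 \<le> s * G0" unfolding G1_def G0_def by (rule transfer(3)[OF ca0 ca1 cb c01 s0 H])
  have G0le: "G0 \<le> s * G1" unfolding G1_def G0_def by (rule transfer(3)[OF ca1 ca0 cb c10 s0 H1'])
  have M0nn: "0 \<le> M0" unfolding M0_def
  proof (rule set_int_nonneg, intro ballI)
    fix x assume x: "x \<in> fund l"
    have "0 \<le> vol a0 b x" using pos x vol_nonneg[where a=a0 and b=b and x=x] by blast
    then show "0 \<le> (q x)\<^sup>2 * vol a0 b x" by simp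
  qed
  have G0nn: "0 \<le> G0" unfolding G0_def
  proof (rule set_int_nonneg, intro ballI)
    fix x assume x: "x \<in> fund l"
    show "0 \<le> grad_sq a0 b g1 g2 x * vol a0 b x"
      using pos x grad_vol_nonneg[where a=a0 and b=b and x=x] by blast
  qed
  have M0p: "0 < M0" using M0nn M0 unfolding M0_def by simp
  have M1p: "0 < M1"
  proof -
    have "0 < s * M1" using M0le M0p by linarith
    then show ?thesis using s0 by (simp add: zero_less_mult_iff)
  qed
  then show "(LINT x:fund l|lborel. (q x)\<^sup>2 * vol a1 b x) \<noteq> 0" unfolding M1_def by simp
  have CV0: "\<forall>x\<in>fund l. \<bar>V0 x\<bar> \<le> C" using VV by auto
  have CV1: "\<forall>x\<in>fund l. \<bar>V1 x\<bar> \<le> C + 1" using VV eta by fastforce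
  have pos0: "\<forall>x\<in>fund l. 0 < a0 x \<and> 0 < b x" using pos by blast
  have pos1: "\<forall>x\<in>fund l. 0 < a1 x \<and> 0 < b x" using pos by blast
  have iv0: "set_integrable lborel (fund l) (\<lambda>x. V0 x * ((q x)\<^sup>2 * vol a0 b x))"
    by (rule vterm[OF H ca0 cb cV0 pos0 CV0])
  have iv1: "set_integrable lborel (fund l) (\<lambda>x. V1 x * ((q x)\<^sup>2 * vol a1 b x))"
    by (rule vterm[OF H1' ca1 cb cV1 pos1 CV1])
  have sp0: "N0 + C * M0 = G0 + R0" unfolding N0_def M0_def G0_def R0_def by (rule quot_split[OF H iv0])
  have sp1: "N1 + C * M1 = G1 + R1" unfolding N1_def M1_def G1_def R1_def by (rule quot_split[OF H1' iv1])
  have iq0: "set_integrable lborel (fund l) (\<lambda>x. (q x)\<^sup>2 * vol a0 b x)" using H unfolding H1_def by auto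
  have iq1: "set_integrable lborel (fund l) (\<lambda>x. (q x)\<^sup>2 * vol a1 b x)" using H1' unfolding H1_def by auto
  have iqC0: "set_integrable lborel (fund l) (\<lambda>x. C * ((q x)\<^sup>2 * vol a0 b x))" using iq0 by simp
  have iqC1: "set_integrable lborel (fund l) (\<lambda>x. C * ((q x)\<^sup>2 * vol a1 b x))" using iq1 by simp
  have ir0: "set_integrable lborel (fund l) (\<lambda>x. C * ((q x)\<^sup>2 * vol a0 b x) - V0 x * ((q x)\<^sup>2 * vol a0 b x))"
    by (rule set_integral_diff(1)[OF iqC0 iv0])
  have ir1: "set_integrable lborel (fund l) (\<lambda>x. C * ((q x)\<^sup>2 * vol a1 b x) - V1 x * ((q x)\<^sup>2 * vol a1 b x))"
    by (rule set_integral_diff(1)[OF iqC1 iv1])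
  have pw: "\<forall>x\<in>fund l.
      (1 - \<eta>) / s * (C * ((q x)\<^sup>2 * vol a0 b x) - V0 x * ((q x)\<^sup>2 * vol a0 b x))
        \<le> C * ((q x)\<^sup>2 * vol a1 b x) - V1 x * ((q x)\<^sup>2 * vol a1 b x)
    \<and> C * ((q x)\<^sup>2 * vol a1 b x) - V1 x * ((q x)\<^sup>2 * vol a1 b x)
        \<le> s * (1 + \<eta>) * (C * ((q x)\<^sup>2 * vol a0 b x) - V0 x * ((q x)\<^sup>2 * vol a0 b x))"
  proof
    fix x assume x: "x \<in> fund l"
    define m0 where "m0 = (q x)\<^sup>2 * vol a0 b x"
    define m1 where "m1 = (q x)\<^sup>2 * vol a1 b x"
    define c0 where "c0 = C - V0 x"
    define c1 where "c1 = C - V1 x"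
    have v01: "vol a1 b x \<le> s * vol a0 b x" using c01 x unfolding cmp_def by auto
    have v10: "vol a0 b x \<le> s * vol a1 b x" using c10 x unfolding cmp_def by auto
    have m0nn: "0 \<le> m0" unfolding m0_def using pos x vol_nonneg[where a=a0 and b=b and x=x] by simp
    have m1nn: "0 \<le> m1" unfolding m1_def using pos x vol_nonneg[where a=a1 and b=b and x=x] by simp
    have m10: "m1 \<le> s * m0" unfolding m1_def m0_def using mult_left_mono[OF v01, of "(q x)\<^sup>2"] by (simp add: algebra_simps)
    have m01: "m0 \<le> s * m1" unfolding m1_def m0_def using mult_left_mono[OF v10, of "(q x)\<^sup>2"] by (simp add: algebra_simps)
    have c0ge: "1 \<le> c0" unfolding c0_def using VV x by auto
    have cd: "\<bar>c1 - c0\<bar> \<le> \<eta>" unfolding c0_def c1_def using VV x by auto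
    have c1up: "c1 \<le> (1 + \<eta>) * c0"
    proof -
      have "\<eta> \<le> \<eta> * c0" using c0ge eta by (simp add: mult_le_cancel_left1)
      then show ?thesis using cd by (simp add: algebra_simps)
    qed
    have c1lo: "(1 - \<eta>) * c0 \<le> c1"
    proof -
      have "\<eta> \<le> \<eta> * c0" using c0ge eta by (simp add: mult_le_cancel_left1)
      then show ?thesis using cd by (simp add: algebra_simps)
    qed
    have c1nn: "0 \<le> c1" using c1lo c0ge eta by (smt (verit) mult_nonneg_nonneg)
    have up: "c1 * m1 \<le> ((1 + \<eta>) * c0) * (s * m0)"
      by (rule mult_mono[OF c1up m10]) (use c0ge eta m1nn in auto)
    have m0s: "m0 / s \<le> m1" using m01 s by (simp add: divide_le_eq mult.commute)
    have lo: "((1 - \<eta>) * c0) * (m0 / s) \<le> c1 * m1"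
      by (rule mult_mono[OF c1lo m0s]) (use c1nn m0nn s in auto)
    show "(1 - \<eta>) / s * (C * ((q x)\<^sup>2 * vol a0 b x) - V0 x * ((q x)\<^sup>2 * vol a0 b x))
        \<le> C * ((q x)\<^sup>2 * vol a1 b x) - V1 x * ((q x)\<^sup>2 * vol a1 b x)
    \<and> C * ((q x)\<^sup>2 * vol a1 b x) - V1 x * ((q x)\<^sup>2 * vol a1 b x)
        \<le> s * (1 + \<eta>) * (C * ((q x)\<^sup>2 * vol a0 b x) - V0 x * ((q x)\<^sup>2 * vol a0 b x))"
    proof -
      have e1: "(1 - \<eta>) / s * (C * m0 - V0 x * m0) = ((1 - \<eta>) * c0) * (m0 / s)"
        unfolding c0_def by (simp add: field_simps)
      have e2: "C * m1 - V1 x * m1 = c1 * m1" unfolding c1_def by (simp add: algebra_simps)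
      have e3: "s * (1 + \<eta>) * (C * m0 - V0 x * m0) = ((1 + \<eta>) * c0) * (s * m0)"
        unfolding c0_def by (simp add: algebra_simps)
      show ?thesis using up lo unfolding m0_def[symmetric] m1_def[symmetric] e1 e2 e3 by simp
    qed
  qed
  have R1up: "R1 \<le> s * (1 + \<eta>) * R0"
  proof -
    have "R1 \<le> (LINT x:fund l|lborel. s * (1 + \<eta>) * (C * ((q x)\<^sup>2 * vol a0 b x) - V0 x * ((q x)\<^sup>2 * vol a0 b x)))"
      unfolding R1_def by (rule set_integral_mono[OF ir1]) (use ir0 pw in auto)
    then show ?thesis unfolding R0_def by simp
  qed
  have R1lo: "(1 - \<eta>) / s * R0 \<le> R1"
  proof -
    have "(LINT x:fund l|lborel. (1 - \<eta>) / s * (C * ((q x)\<^sup>2 * vol a0 b x) - V0 x * ((q x)\<^sup>2 * vol a0 b x))) \<le> R1"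
      unfolding R1_def by (rule set_integral_mono[OF _ ir1]) (use ir0 pw in auto)
    then show ?thesis unfolding R0_def by simp
  qed
  have R0nn: "0 \<le> R0" unfolding R0_def
  proof (rule set_int_nonneg, intro ballI)
    fix x assume x: "x \<in> fund l"
    have "0 \<le> (C - V0 x) * ((q x)\<^sup>2 * vol a0 b x)"
      using VV x pos vol_nonneg[where a=a0 and b=b and x=x] by (intro mult_nonneg_nonneg) auto
    then show "0 \<le> C * ((q x)\<^sup>2 * vol a0 b x) - V0 x * ((q x)\<^sup>2 * vol a0 b x)" by (simp add: algebra_simps)
  qed
  have Q0: "N0 / M0 + C = (G0 + R0) / M0" using sp0 M0p by (simp add: field_simps)
  have Q1: "N1 / M1 + C = (G1 + R1) / M1" using sp1 M1p by (simp add: field_simps)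
  have W0nn: "0 \<le> G0 + R0" using G0nn R0nn by simp
  show "0 \<le> N0 / M0 + C" unfolding Q0 using W0nn M0p by simp
  have W1up: "G1 + R1 \<le> s * (1 + \<eta>) * (G0 + R0)"
  proof -
    have "s * G0 \<le> s * (1 + \<eta>) * G0" using s G0nn eta by (simp add: mult_le_cancel_left1 mult_right_mono)
    then show ?thesis using G1le R1up by (simp add: algebra_simps)
  qed
  have W1lo: "(1 - \<eta>) / s * (G0 + R0) \<le> G1 + R1"
  proof -
    have "G0 / s \<le> G1" using G0le s by (simp add: divide_le_eq mult.commute)
    moreover have "(1 - \<eta>) / s * G0 \<le> G0 / s" using s G0nn eta
      by (simp add: divide_right_mono mult_left_le_one_le)
    moreover have "(1 - \<eta>) / s * (G0 + R0) = (1 - \<eta>) / s * G0 + (1 - \<eta>) / s * R0"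
      by (simp add: distrib_left)
    ultimately show ?thesis using R1lo by linarith
  qed
  have W1nn: "0 \<le> G1 + R1"
  proof -
    have "0 \<le> (1 - \<eta>) / s * (G0 + R0)" using eta s W0nn by simp
    then show ?thesis using W1lo by linarith
  qed
  show "(1 - \<eta>) / s\<^sup>2 * (N0 / M0 + C) \<le> N1 / M1 + C"
  proof -
    have "(1 - \<eta>) / s\<^sup>2 * (N0 / M0 + C) = ((1 - \<eta>) / s * (G0 + R0)) / (s * M0)"
      unfolding Q0 by (simp add: power2_eq_square)
    also have "\<dots> \<le> (G1 + R1) / M1"
      by (rule frac_le) (use W1lo W1nn M1le M1p in auto)
    finally show ?thesis unfolding Q1 .
  qed
  show "N1 / M1 + C \<le> s\<^sup>2 * (1 + \<eta>) * (N0 / M0 + C)"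
  proof -
    have "N1 / M1 + C \<le> (s * (1 + \<eta>) * (G0 + R0)) / (M0 / s)"
      unfolding Q1
    proof (rule frac_le)
      show "0 \<le> s * (1 + \<eta>) * (G0 + R0)" using s eta W0nn by simp
      show "G1 + R1 \<le> s * (1 + \<eta>) * (G0 + R0)" by (rule W1up)
      show "0 < M0 / s" using M0p s by simp
      show "M0 / s \<le> M1" using M0le s by (simp add: divide_le_eq mult.commute)
    qed
    also have "\<dots> = s\<^sup>2 * (1 + \<eta>) * (N0 / M0 + C)"
      unfolding Q0 using s by (simp add: power2_eq_square)
    finally show ?thesis .
  qed
qed


definition RQ :: "real \<Rightarrow> (real \<times> real \<Rightarrow> real) \<Rightarrow> (real \<times> real \<Rightarrow> real) \<Rightarrow> (real \<times> real \<Rightarrow> real)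
   \<Rightarrow> (real \<times> real \<Rightarrow> real) \<times> (real \<times> real \<Rightarrow> real) \<times> (real \<times> real \<Rightarrow> real) \<Rightarrow> real" where
  "RQ l a b V z = (case z of (q, g1, g2) \<Rightarrow>
     (LINT x:fund l|lborel. (grad_sq a b g1 g2 x - V x * (q x)\<^sup>2) * vol a b x)
        / (LINT x:fund l|lborel. (q x)\<^sup>2 * vol a b x))"

definition adm :: "real \<Rightarrow> (real \<times> real \<Rightarrow> real) \<Rightarrow> (real \<times> real \<Rightarrow> real)
   \<Rightarrow> ((real \<times> real \<Rightarrow> real) \<times> (real \<times> real \<Rightarrow> real) \<times> (real \<times> real \<Rightarrow> real)) set" where
  "adm l a b = {(q, g1, g2). H1 l a b q g1 g2 \<and> (LINT x:fund l|lborel. (q x)\<^sup>2 * vol a b x) \<noteq> 0}"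

lemma rayleigh_eq: "rayleigh_set l a b V = RQ l a b V ` adm l a b"
  unfolding rayleigh_set_def RQ_def adm_def by (auto simp: image_def)

lemma eig_compare:
  fixes a0 a1 b V0 V1 :: "real \<times> real \<Rightarrow> real"
  assumes ca0: "continuous_on (fund l) a0" and ca1: "continuous_on (fund l) a1"
    and cb: "continuous_on (fund l) b" and cV0: "continuous_on (fund l) V0" and cV1: "continuous_on (fund l) V1"
    and c01: "cmp l a0 a1 b s" and c10: "cmp l a1 a0 b s" and s: "1 \<le> s" and eta: "0 \<le> \<eta>" "\<eta> \<le> 1"
    and VV: "\<forall>x\<in>fund l. \<bar>V1 x - V0 x\<bar> \<le> \<eta> \<and> \<bar>V0 x\<bar> + 1 \<le> C"
  shows "\<bar>principal_eig l a1 b V1 - principal_eig l a0 b V0\<bar>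
     \<le> ((s\<^sup>2 * (1 + \<eta>) - 1) + (1 - (1 - \<eta>) / s\<^sup>2)) * \<bar>principal_eig l a0 b V0 + C\<bar>"
proof -
  have VV': "\<forall>x\<in>fund l. \<bar>V0 x - V1 x\<bar> \<le> \<eta> \<and> \<bar>V1 x\<bar> + 1 \<le> C + 1"
    using VV eta by fastforce
  note Q = cmp_quot[OF ca0 ca1 cb cV0 cV1 c01 c10 s eta VV]
  note Q' = cmp_quot[OF ca1 ca0 cb cV1 cV0 c10 c01 s eta VV']
  have A: "adm l a1 b = adm l a0 b"
  proof (rule set_eqI)
    fix z :: "(real \<times> real \<Rightarrow> real) \<times> (real \<times> real \<Rightarrow> real) \<times> (real \<times> real \<Rightarrow> real)"
    obtain q g1 g2 where z: "z = (q, g1, g2)" by (cases z) auto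
    show "z \<in> adm l a1 b \<longleftrightarrow> z \<in> adm l a0 b"
      unfolding z adm_def mem_Collect_eq prod.case
    proof
      assume "H1 l a1 b q g1 g2 \<and> (LINT x:fund l|lborel. (q x)\<^sup>2 * vol a1 b x) \<noteq> 0"
      then show "H1 l a0 b q g1 g2 \<and> (LINT x:fund l|lborel. (q x)\<^sup>2 * vol a0 b x) \<noteq> 0"
        using Q'(1)[of q g1 g2] Q'(2)[of q g1 g2] by blast
    next
      assume "H1 l a0 b q g1 g2 \<and> (LINT x:fund l|lborel. (q x)\<^sup>2 * vol a0 b x) \<noteq> 0"
      then show "H1 l a1 b q g1 g2 \<and> (LINT x:fund l|lborel. (q x)\<^sup>2 * vol a1 b x) \<noteq> 0"
        using Q(1)[of q g1 g2] Q(2)[of q g1 g2] by blast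
    qed
  qed
  define K where "K = s\<^sup>2 * (1 + \<eta>)"
  define k where "k = (1 - \<eta>) / s\<^sup>2"
  have K1: "1 \<le> K"
  proof -
    have s2: "1 \<le> s\<^sup>2" using s by (simp add: one_le_power)
    have "0 \<le> s\<^sup>2 * \<eta>" using eta by simp
    then show ?thesis unfolding K_def using s2 by (simp add: algebra_simps)
  qed
  have s2: "1 \<le> s\<^sup>2" using s by (simp add: one_le_power)
  have k0: "0 \<le> k" "k \<le> 1" unfolding k_def using s2 eta by (auto simp: divide_le_eq)
  have F: "\<And>z. z \<in> adm l a0 b \<Longrightarrow> 0 \<le> RQ l a0 b V0 z + C \<and>
      k * (RQ l a0 b V0 z + C) \<le> RQ l a1 b V1 z + C \<and> RQ l a1 b V1 z + C \<le> K * (RQ l a0 b V0 z + C)"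
  proof -
    fix z assume zA: "z \<in> adm l a0 b"
    obtain q g1 g2 where z: "z = (q, g1, g2)" by (cases z) auto
    have H: "H1 l a0 b q g1 g2" and M: "(LINT x:fund l|lborel. (q x)\<^sup>2 * vol a0 b x) \<noteq> 0"
      using zA unfolding z adm_def by auto
    show "0 \<le> RQ l a0 b V0 z + C \<and>
      k * (RQ l a0 b V0 z + C) \<le> RQ l a1 b V1 z + C \<and> RQ l a1 b V1 z + C \<le> K * (RQ l a0 b V0 z + C)"
      unfolding z RQ_def prod.case K_def k_def using Q(3)[OF H M] Q(4)[OF H M] Q(5)[OF H M] by blast
  qed
  define L0 where "L0 = principal_eig l a0 b V0"
  define L1 where "L1 = principal_eig l a1 b V1"
  show ?thesis
  proof (cases "adm l a0 b = {}")
    case True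
    then have "L1 = L0" unfolding L0_def L1_def principal_eig_def rayleigh_eq A by simp
    then show ?thesis using K1 k0 unfolding L0_def[symmetric] L1_def[symmetric] K_def[symmetric] k_def[symmetric] by simp
  next
    case False
    have bdd0: "bdd_below (RQ l a0 b V0 ` adm l a0 b)"
      using F by (intro bdd_belowI2[where m="-C"]) force
    have bdd1: "bdd_below (RQ l a1 b V1 ` adm l a0 b)"
    proof (intro bdd_belowI2[where m="-C"])
      fix z assume z: "z \<in> adm l a0 b"
      have "0 \<le> k * (RQ l a0 b V0 z + C)" using F[OF z] k0 by simp
      then show "- C \<le> RQ l a1 b V1 z" using F[OF z] by linarith
    qed
    have L0le: "\<And>z. z \<in> adm l a0 b \<Longrightarrow> L0 \<le> RQ l a0 b V0 z"
      unfolding L0_def principal_eig_def rayleigh_eq by (rule cInf_lower) (use bdd0 in auto)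
    have L1le: "\<And>z. z \<in> adm l a0 b \<Longrightarrow> L1 \<le> RQ l a1 b V1 z"
      unfolding L1_def principal_eig_def rayleigh_eq A by (rule cInf_lower) (use bdd1 in auto)
    obtain z0 where z0: "z0 \<in> adm l a0 b" using False by auto
    have L0C: "0 \<le> L0 + C"
    proof -
      have "L0 \<ge> -C"
        unfolding L0_def principal_eig_def rayleigh_eq
        by (rule cInf_greatest) (use False F in force)+
      then show ?thesis by simp
    qed
    have lo: "k * (L0 + C) - C \<le> L1"
      unfolding L1_def principal_eig_def rayleigh_eq A
    proof (rule cInf_greatest)
      show "RQ l a1 b V1 ` adm l a0 b \<noteq> {}" using False by simp
      fix y assume "y \<in> RQ l a1 b V1 ` adm l a0 b"
      then obtain z where z: "z \<in> adm l a0 b" and y: "y = RQ l a1 b V1 z" by auto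
      have "k * (L0 + C) \<le> k * (RQ l a0 b V0 z + C)" using L0le[OF z] k0 by (simp add: mult_left_mono)
      then show "k * (L0 + C) - C \<le> y" using F[OF z] y by linarith
    qed
    have up: "(L1 + C) / K - C \<le> L0"
      unfolding L0_def principal_eig_def rayleigh_eq
    proof (rule cInf_greatest)
      show "RQ l a0 b V0 ` adm l a0 b \<noteq> {}" using False by simp
      fix y assume "y \<in> RQ l a0 b V0 ` adm l a0 b"
      then obtain z where z: "z \<in> adm l a0 b" and y: "y = RQ l a0 b V0 z" by auto
      have "L1 + C \<le> K * (RQ l a0 b V0 z + C)" using L1le[OF z] F[OF z] by linarith
      then have "(L1 + C) / K \<le> RQ l a0 b V0 z + C" using K1 by (simp add: divide_le_eq mult.commute)
      then show "(L1 + C) / K - C \<le> y" using y by linarith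
    qed
    have up': "L1 + C \<le> K * (L0 + C)"
    proof -
      have "(L1 + C) / K \<le> L0 + C" using up by linarith
      then show ?thesis using K1 by (simp add: divide_le_eq mult.commute)
    qed
    have "L1 - L0 \<le> (K - 1) * (L0 + C)" using up' by (simp add: algebra_simps)
    moreover have "L0 - L1 \<le> (1 - k) * (L0 + C)" using lo by (simp add: algebra_simps)
    moreover have "0 \<le> (K - 1) * (L0 + C)" "0 \<le> (1 - k) * (L0 + C)" using K1 k0 L0C by auto
    ultimately have "\<bar>L1 - L0\<bar> \<le> ((K - 1) + (1 - k)) * (L0 + C)"
      by (simp add: algebra_simps abs_le_iff)
    then show ?thesis unfolding L0_def[symmetric] L1_def[symmetric] K_def[symmetric] k_def[symmetric]
      using L0C by simp
  qed
qed



lemma sqrt_le_self: "1 \<le> (r::real) \<Longrightarrow> sqrt r \<le> r"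
proof -
  assume r: "1 \<le> r"
  have s1: "1 \<le> sqrt r" using r by simp
  have "sqrt r * sqrt r = r" using r by simp
  moreover have "sqrt r * 1 \<le> sqrt r * sqrt r" using s1 by (intro mult_left_mono) auto
  ultimately show ?thesis by simp
qed

lemma cmp_from_ratio:
  assumes A: "\<forall>x\<in>fund l. 0 < a0 x \<and> 0 < a1 x \<and> 0 < b x \<and> a1 x \<le> r * a0 x \<and> a0 x \<le> r * a1 x"
    and r: "1 \<le> r"
  shows "cmp l a0 a1 b r"
  unfolding cmp_def
proof
  fix x assume x: "x \<in> fund l"
  have p0: "0 < a0 x" and p1: "0 < a1 x" and pb: "0 < b x" and r10: "a1 x \<le> r * a0 x" and r01: "a0 x \<le> r * a1 x"
    using A x by auto
  have sr: "sqrt r \<le> r" by (rule sqrt_le_self[OF r])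
  have "sqrt (a1 x) \<le> sqrt (r * a0 x)" using r10 by simp
  also have "\<dots> = sqrt r * sqrt (a0 x)" by (simp add: real_sqrt_mult)
  also have "\<dots> \<le> r * sqrt (a0 x)" using mult_right_mono[OF sr, of "sqrt (a0 x)"] p0 by simp
  finally have q1: "sqrt (a1 x) \<le> r * sqrt (a0 x)" .
  have "sqrt (a0 x) \<le> sqrt (r * a1 x)" using r01 by simp
  also have "\<dots> = sqrt r * sqrt (a1 x)" by (simp add: real_sqrt_mult)
  also have "\<dots> \<le> r * sqrt (a1 x)" using mult_right_mono[OF sr, of "sqrt (a1 x)"] p1 by simp
  finally have q0: "sqrt (a0 x) \<le> r * sqrt (a1 x)" .
  have v1: "vol a1 b x = sqrt (a1 x) * sqrt (b x)" unfolding vol_def by (simp add: real_sqrt_mult)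
  have v0: "vol a0 b x = sqrt (a0 x) * sqrt (b x)" unfolding vol_def by (simp add: real_sqrt_mult)
  have sa1: "sqrt (a1 x) * sqrt (a1 x) = a1 x" using p1 by simp
  have sa0: "sqrt (a0 x) * sqrt (a0 x) = a0 x" using p0 by simp
  have d1: "vol a1 b x / a1 x = sqrt (b x) / sqrt (a1 x)"
    unfolding v1 using p1 sa1[symmetric] by (simp add: field_simps)
  have d0: "vol a0 b x / a0 x = sqrt (b x) / sqrt (a0 x)"
    unfolding v0 using p0 sa0[symmetric] by (simp add: field_simps)
  have sb: "0 \<le> sqrt (b x)" using pb by simp
  have e1: "vol a1 b x \<le> r * vol a0 b x"
    unfolding v1 v0 using mult_right_mono[OF q1 sb] by (simp add: mult.assoc)
  have e2: "sqrt (b x) / sqrt (a1 x) \<le> r * (sqrt (b x) / sqrt (a0 x))"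
  proof -
    have "sqrt (b x) * sqrt (a0 x) \<le> sqrt (b x) * (r * sqrt (a1 x))" using q0 sb by (simp add: mult_left_mono)
    then show ?thesis using p0 p1 by (simp add: field_simps)
  qed
  show "0 < a0 x \<and> 0 < a1 x \<and> 0 < b x \<and> vol a1 b x \<le> r * vol a0 b x \<and> vol a1 b x / a1 x \<le> r * (vol a0 b x / a0 x)"
    using p0 p1 pb e1 e2 d1 d0 by simp
qed

lemma arith_E:
  fixes \<rho> :: real
  assumes "0 \<le> \<rho>" "\<rho> \<le> 1"
  shows "((1 + \<rho>)\<^sup>2 * (1 + \<rho>) - 1) + (1 - (1 - \<rho>) / (1 + \<rho>)\<^sup>2) \<le> 10 * \<rho>"
proof -
  have a: "(1 + \<rho>)\<^sup>2 * (1 + \<rho>) - 1 \<le> 7 * \<rho>"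
  proof -
    have "\<rho> * \<rho> \<le> \<rho> * 1" using assms by (intro mult_left_mono) auto
    then have r2: "\<rho>^2 \<le> \<rho>" by (simp add: power2_eq_square)
    have "\<rho> * \<rho>^2 \<le> \<rho> * \<rho>" using assms r2 by (intro mult_left_mono) auto
    then have "\<rho>^3 \<le> \<rho>" using r2 by (simp add: power3_eq_cube power2_eq_square)
    then show ?thesis using r2 by (simp add: power2_eq_square power3_eq_cube algebra_simps)
  qed
  have p: "0 < (1 + \<rho>)\<^sup>2" using assms by simp
  have "(1 - 2 * \<rho>) * (1 + \<rho>)\<^sup>2 \<le> 1"
  proof -
    have "(1 - 2 * \<rho>) * (1 + \<rho>)\<^sup>2 = 1 - 3 * \<rho>^2 - 2 * \<rho>^3" by (simp add: power2_eq_square power3_eq_cube algebra_simps)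
    moreover have "0 \<le> \<rho>^2" "0 \<le> \<rho>^3" using assms by auto
    ultimately show ?thesis by linarith
  qed
  then have "1 - 2 * \<rho> \<le> 1 / (1 + \<rho>)\<^sup>2" using p by (simp add: le_divide_eq)
  then have "(1 - \<rho>) * (1 - 2 * \<rho>) \<le> (1 - \<rho>) * (1 / (1 + \<rho>)\<^sup>2)"
    using assms by (intro mult_left_mono) auto
  moreover have "(1 - \<rho>) * (1 - 2 * \<rho>) = 1 - 3 * \<rho> + 2 * \<rho>^2" by (simp add: algebra_simps power2_eq_square)
  ultimately have c: "1 - 3 * \<rho> + 2 * \<rho>^2 \<le> (1 - \<rho>) / (1 + \<rho>)\<^sup>2" by simp
  have "0 \<le> \<rho>^2" by simp
  then have b: "1 - 3 * \<rho> \<le> (1 - \<rho>) / (1 + \<rho>)\<^sup>2" using c by linarith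
  show ?thesis using a b by linarith
qed


lemma bnd_abs:
  fixes f :: "real \<times> real \<Rightarrow> real"
  assumes "bounded (f ` S)"
  shows "bdd_above ((\<lambda>x. \<bar>f x\<bar>) ` S)"
proof -
  obtain B where B: "\<forall>y\<in>f ` S. norm y \<le> B" using assms unfolding bounded_iff by blast
  show ?thesis by (rule bdd_aboveI2[where M=B]) (use B in auto)
qed

lemma sup_le_norm:
  assumes C: "C2a l \<alpha> h" and x: "x \<in> strip l"
  shows "\<bar>h x\<bar> \<le> C2a_norm l \<alpha> h"
proof -
  have b0: "bounded (h ` strip l)"
    and b1: "\<forall>v\<in>basis2. bounded ((\<lambda>x. D l h x v) ` strip l)"
    and b2: "\<forall>v\<in>basis2. \<forall>w\<in>basis2. bounded ((\<lambda>x. D l (\<lambda>y. D l h y v) x w) ` strip l)"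
    and b3: "\<forall>v\<in>basis2. \<forall>w\<in>basis2. bdd_above (hoelder_quot l \<alpha> (\<lambda>x. D l (\<lambda>y. D l h y v) x w))"
    using C unfolding C2a_def by auto
  have S0: "\<bar>h x\<bar> \<le> (SUP x\<in>strip l. \<bar>h x\<bar>)"
    by (rule cSUP_upper[OF x bnd_abs[OF b0]])
  have S1: "0 \<le> (\<Sum>v\<in>basis2. SUP x\<in>strip l. \<bar>D l h x v\<bar>)"
  proof (rule sum_nonneg)
    fix v assume v: "v \<in> basis2"
    show "0 \<le> (SUP x\<in>strip l. \<bar>D l h x v\<bar>)"
      by (rule cSUP_upper2[OF bnd_abs[OF b1[rule_format, OF v]] x]) simp
  qed
  have S2: "0 \<le> (\<Sum>v\<in>basis2. \<Sum>w\<in>basis2. SUP x\<in>strip l. \<bar>D l (\<lambda>y. D l h y v) x w\<bar>)"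
  proof (intro sum_nonneg)
    fix v w assume v: "v \<in> basis2" and w: "w \<in> basis2"
    show "0 \<le> (SUP x\<in>strip l. \<bar>D l (\<lambda>y. D l h y v) x w\<bar>)"
      by (rule cSUP_upper2[OF bnd_abs[OF b2[rule_format, OF v w]] x]) simp
  qed
  have S3: "0 \<le> (\<Sum>v\<in>basis2. \<Sum>w\<in>basis2. Sup (hoelder_quot l \<alpha> (\<lambda>x. D l (\<lambda>y. D l h y v) x w)))"
  proof (intro sum_nonneg)
    fix v w assume v: "v \<in> basis2" and w: "w \<in> basis2"
    define k where "k = (\<lambda>x. D l (\<lambda>y. D l h y v) x w)"
    define y where "y = (fst x, snd x + 1)"
    have y: "y \<in> strip l" using x unfolding y_def strip_def by (cases x) auto
    have xy: "x \<noteq> y" unfolding y_def by (cases x) auto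
    have mem: "\<bar>k x - k y\<bar> / (dist x y powr \<alpha>) \<in> hoelder_quot l \<alpha> k"
      unfolding hoelder_quot_def using x y xy by blast
    show "0 \<le> Sup (hoelder_quot l \<alpha> (\<lambda>x. D l (\<lambda>y. D l h y v) x w))"
      unfolding k_def[symmetric]
      by (rule cSup_upper2[OF mem]) (use b3 v w k_def in auto)
  qed
  show ?thesis unfolding C2a_norm_def using S0 S1 S2 S3 by linarith
qed


lemma cont_from_deriv:
  assumes "\<forall>s\<in>{0..l}. (g has_real_derivative g' s) (at s within {0..l})"
  shows "continuous_on {0..l} g"
  unfolding continuous_on_eq_continuous_within using assms DERIV_continuous by blast

lemma cont_fst_fund:
  assumes "continuous_on {0..l} g"
  shows "continuous_on (fund l) (\<lambda>x. g (fst x))"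
  by (rule continuous_on_compose2[OF assms continuous_on_fst[OF continuous_on_id]]) (auto simp: fund_def)

lemma fund_sub_strip: "fund l \<subseteq> strip l"
  unfolding fund_def strip_def by auto

lemma compact_fund: "compact (fund l)"
  unfolding fund_def by (intro compact_Times compact_Icc)

lemma C2_cont:
  assumes "C2_on_I l u"
  shows "continuous_on (fund l) u"
proof -
  have "continuous_on (strip l) u"
    unfolding continuous_on_eq_continuous_within
    using assms unfolding C2_on_I_def by (blast intro: differentiable_imp_continuous_within)
  then show ?thesis using fund_sub_strip continuous_on_subset by blast
qed

lemma bound_on_fund:
  fixes g :: "real \<times> real \<Rightarrow> real"
  assumes "continuous_on (fund l) g"
  obtains B where "B > 0" "\<forall>x\<in>fund l. \<bar>g x\<bar> \<le> B"
proof -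
  have "bounded (g ` fund l)" by (rule compact_imp_bounded[OF compact_continuous_image[OF assms compact_fund]])
  then obtain B where B: "\<forall>y\<in>g ` fund l. norm y \<le> B" unfolding bounded_iff by blast
  show ?thesis by (rule that[of "\<bar>B\<bar> + 1"]) (use B in force)+
qed

lemma a_bounds:
  fixes a0 a1 \<rho> :: real
  assumes "1 \<le> a0" "\<bar>a1 - a0\<bar> \<le> \<rho> / 2" "0 \<le> \<rho>" "\<rho> \<le> 1"
  shows "0 < a1 \<and> a1 \<le> (1 + \<rho>) * a0 \<and> a0 \<le> (1 + \<rho>) * a1"
proof -
  have "\<rho> \<le> \<rho> * a0" using assms by (simp add: mult_le_cancel_left1)
  have d1: "a1 - a0 \<le> \<rho> / 2" and d2: "- (a1 - a0) \<le> \<rho> / 2" using assms(2) abs_le_D1 abs_le_D2 by blast+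
  have l: "a0 - \<rho> / 2 \<le> a1" and u0: "a1 \<le> a0 + \<rho> / 2" using d1 d2 by linarith+
  have u: "a1 \<le> (1 + \<rho>) * a0" using u0 \<open>\<rho> \<le> \<rho> * a0\<close> assms(3) by (simp add: algebra_simps)
  have p: "0 < a1" using assms l by linarith
  have "(1 + \<rho>) * (a0 - \<rho> / 2) \<le> (1 + \<rho>) * a1" using l assms by (intro mult_left_mono) auto
  moreover have "a0 \<le> (1 + \<rho>) * (a0 - \<rho> / 2)"
  proof -
    have "(1 + \<rho>) * (a0 - \<rho> / 2) = a0 + \<rho> * a0 - \<rho> / 2 - \<rho> * \<rho> / 2" by (simp add: algebra_simps)
    moreover have "\<rho> * \<rho> \<le> \<rho>" using assms by (simp add: mult_le_cancel_left1 mult_left_le_one_le)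
    ultimately show ?thesis using \<open>\<rho> \<le> \<rho> * a0\<close> by linarith
  qed
  ultimately show ?thesis using u p by linarith
qed

lemma y_bound:
  fixes y t :: real
  assumes "\<bar>y\<bar> \<le> t" "t \<le> 1"
  shows "\<bar>(y - 1)\<^sup>2 - 1\<bar> \<le> 3 * t"
proof -
  have e: "(y - 1)\<^sup>2 - 1 = y * (y - 2)" by (simp add: power2_eq_square algebra_simps)
  have "\<bar>y - 2\<bar> \<le> 3" using assms by linarith
  then have "\<bar>y\<bar> * \<bar>y - 2\<bar> \<le> t * 3" using assms by (intro mult_mono) auto
  then show ?thesis unfolding e by (simp add: abs_mult)
qed



theorem lemma4p5:
  fixes l \<alpha> \<delta>0 \<delta>1 :: real
    and \<Psi> \<Psi>1 \<Psi>2 \<Psi>3 :: "real \<Rightarrow> real"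
    and f f' :: "real \<Rightarrow> real"
    and ug :: "real \<Rightarrow> real"
    and U :: "real \<Rightarrow> real \<times> real \<Rightarrow> real"
    and \<epsilon>1 :: "real \<Rightarrow> real"
  assumes l_pos: "l > 0"
    and d1: "\<forall>s\<in>{0..l}. (\<Psi> has_real_derivative \<Psi>1 s) (at s within {0..l})"
    and d2: "\<forall>s\<in>{0..l}. (\<Psi>1 has_real_derivative \<Psi>2 s) (at s within {0..l})"
    and d3: "\<forall>s\<in>{0..l}. (\<Psi>2 has_real_derivative \<Psi>3 s) (at s within {0..l})"
    and d3c: "continuous_on {0..l} \<Psi>3"
    and Psi_pos: "\<forall>s\<in>{0..l}. \<Psi> s > 0"
    and Psi_bd: "\<Psi>1 0 = 0" "\<Psi>1 l = 0" "\<Psi>3 0 = 0" "\<Psi>3 l = 0"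
    and Psi_s0: "\<exists>s0\<in>{0<..<l}. \<Psi>2 s0 * \<Psi> s0 - (\<Psi>1 s0)\<^sup>2 * (1 + (\<Psi>1 s0)\<^sup>2) > 0"
    and f_C1: "\<forall>u. (f has_real_derivative f' u) (at u)" "continuous_on UNIV f'"
    and ug_stat: "stationary_neumann l (gD11 \<Psi>1) (g22 \<Psi>) f (\<lambda>x. ug (fst x))"
    and ug_nonconst: "\<exists>s1\<in>{0..l}. \<exists>s2\<in>{0..l}. ug s1 \<noteq> ug s2"
    and lam_pos: "principal_eig l (gD11 \<Psi>1) (g22 \<Psi>) (\<lambda>x. f' (ug (fst x))) > 0"
    and alpha: "0 < \<alpha>" "\<alpha> < 1"
    and delta0: "\<delta>0 > 0"
    and embedded: "\<forall>\<kappa>. 0 < \<bar>\<kappa>\<bar> \<and> \<bar>\<kappa>\<bar> \<le> \<delta>0 \<longrightarrow>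
        inj_on (Mpar \<Psi> \<kappa>) ({0..l} \<times> {0..<2*pi}) \<and> (\<forall>x\<in>strip l. gK11 \<Psi> \<Psi>1 \<kappa> x > 0)"
    and delta1: "0 < \<delta>1" "\<delta>1 < \<delta>0"
    and eps1: "(\<epsilon>1 \<longlongrightarrow> 0) (at 0)"
    and U_stat: "\<forall>\<kappa>. 0 < \<bar>\<kappa>\<bar> \<and> \<bar>\<kappa>\<bar> < \<delta>1 \<longrightarrow>
        stationary_neumann l (gK11 \<Psi> \<Psi>1 \<kappa>) (g22 \<Psi>) f (U \<kappa>) \<and> C2a l \<alpha> (U \<kappa>)"
    and U_close: "\<forall>\<kappa>. 0 < \<bar>\<kappa>\<bar> \<and> \<bar>\<kappa>\<bar> < \<delta>1 \<longrightarrow>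
        C2a l \<alpha> (\<lambda>x. U \<kappa> x - ug (fst x)) \<and>
        C2a_norm l \<alpha> (\<lambda>x. U \<kappa> x - ug (fst x)) < \<epsilon>1 \<kappa>"
  shows "((\<lambda>\<kappa>. principal_eig l (gK11 \<Psi> \<Psi>1 \<kappa>) (g22 \<Psi>) (\<lambda>x. f' (U \<kappa> x)))
          \<longlongrightarrow> principal_eig l (gD11 \<Psi>1) (g22 \<Psi>) (\<lambda>x. f' (ug (fst x)))) (at 0)"
proof -
  have cPsi: "continuous_on {0..l} \<Psi>" by (rule cont_from_deriv[OF d1])
  have cPsi1: "continuous_on {0..l} \<Psi>1" by (rule cont_from_deriv[OF d2])
  have cPf: "continuous_on (fund l) (\<lambda>x. \<Psi> (fst x))" by (rule cont_fst_fund[OF cPsi])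
  have cP1f: "continuous_on (fund l) (\<lambda>x. \<Psi>1 (fst x))" by (rule cont_fst_fund[OF cPsi1])
  define a0 where "a0 = gD11 \<Psi>1"
  define b where "b = g22 \<Psi>"
  define V0 where "V0 = (\<lambda>x::real \<times> real. f' (ug (fst x)))"
  have a0_eq: "a0 = (\<lambda>x. 1 + (\<Psi>1 (fst x))\<^sup>2)" unfolding a0_def by (simp add: fun_eq_iff gD11_def)
  have b_eq: "b = (\<lambda>x. (\<Psi> (fst x))\<^sup>2)" unfolding b_def by (simp add: fun_eq_iff g22_def)
  have ak_eq: "\<And>\<kappa>. gK11 \<Psi> \<Psi>1 \<kappa> = (\<lambda>x. (\<Psi>1 (fst x))\<^sup>2 + (\<kappa> * \<Psi> (fst x) * cos (snd x) - 1)\<^sup>2)"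
    by (simp add: fun_eq_iff gK11_def)
  have ca0: "continuous_on (fund l) a0" unfolding a0_eq by (intro continuous_intros cP1f)
  have cb: "continuous_on (fund l) b" unfolding b_eq by (intro continuous_intros cPf)
  have cak: "\<And>\<kappa>. continuous_on (fund l) (gK11 \<Psi> \<Psi>1 \<kappa>)"
    unfolding ak_eq by (intro continuous_intros cPf cP1f)
  have C2ug: "C2_on_I l (\<lambda>x. ug (fst x))" using ug_stat unfolding stationary_neumann_def by blast
  have cug: "continuous_on (fund l) (\<lambda>x. ug (fst x))" by (rule C2_cont[OF C2ug])
  have cV0: "continuous_on (fund l) V0"
    unfolding V0_def by (rule continuous_on_compose2[OF f_C1(2) cug]) auto
  have fstin: "\<And>x. x \<in> fund l \<Longrightarrow> fst x \<in> {0..l}" unfolding fund_def by auto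
  have bpos: "\<forall>x\<in>fund l. 0 < b x"
  proof
    fix x assume "x \<in> fund l"
    then have "0 < \<Psi> (fst x)" using Psi_pos fstin by blast
    then show "0 < b x" unfolding b_eq by simp
  qed
  have a0ge: "\<forall>x\<in>fund l. 1 \<le> a0 x" unfolding a0_eq by simp
  obtain P where P: "P > 0" "\<forall>x\<in>fund l. \<bar>\<Psi> (fst x)\<bar> \<le> P" using bound_on_fund[OF cPf] by blast
  obtain Bu where Bu: "Bu > 0" "\<forall>x\<in>fund l. \<bar>ug (fst x)\<bar> \<le> Bu" using bound_on_fund[OF cug] by blast
  obtain Bv where Bv: "Bv > 0" "\<forall>x\<in>fund l. \<bar>V0 x\<bar> \<le> Bv" using bound_on_fund[OF cV0] by blast
  define C where "C = Bv + 1"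
  define L0 where "L0 = principal_eig l a0 b V0"
  have uc: "uniformly_continuous_on (cball 0 (Bu + 1)) f'"
    by (rule compact_uniformly_continuous) (auto intro: continuous_on_subset[OF f_C1(2)])
  have main: "\<forall>\<^sub>F \<kappa> in at 0. dist (principal_eig l (gK11 \<Psi> \<Psi>1 \<kappa>) b (\<lambda>x. f' (U \<kappa> x))) L0 < e"
    if e: "e > 0" for e
  proof -
    define \<rho> where "\<rho> = min 1 (e / (20 * (\<bar>L0 + C\<bar> + 1)))"
    have den: "0 < 20 * (\<bar>L0 + C\<bar> + 1)" proof -
      have "0 < \<bar>L0 + C\<bar> + 1" using abs_ge_zero[of "L0 + C"] by (rule add_nonneg_pos) simp
      then show ?thesis by simp
    qed
    have rho0: "0 < \<rho>" unfolding \<rho>_def using e den by simp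
    have rho1: "\<rho> \<le> 1" unfolding \<rho>_def by simp
    have rhoe: "10 * \<rho> * \<bar>L0 + C\<bar> < e"
    proof -
      have "\<rho> \<le> e / (20 * (\<bar>L0 + C\<bar> + 1))" unfolding \<rho>_def by simp
      then have "\<rho> * (20 * (\<bar>L0 + C\<bar> + 1)) \<le> e" using den by (simp add: le_divide_eq)
      moreover have "0 < \<rho> * (10 * \<bar>L0 + C\<bar> + 20)"
      proof -
        have h: "0 \<le> \<bar>L0 + C\<bar>" by simp
        have "0 < 10 * \<bar>L0 + C\<bar> + 20" by (rule add_nonneg_pos) (use h in simp_all)
        then show ?thesis using rho0 by simp
      qed
      moreover have "\<rho> * (20 * (\<bar>L0 + C\<bar> + 1)) = 10 * \<rho> * \<bar>L0 + C\<bar> + \<rho> * (10 * \<bar>L0 + C\<bar> + 20)"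
        by (simp add: algebra_simps)
      ultimately show ?thesis by linarith
    qed
    obtain dU where dU: "dU > 0" "\<forall>x\<in>cball 0 (Bu + 1). \<forall>x'\<in>cball 0 (Bu + 1). dist x' x < dU \<longrightarrow> dist (f' x') (f' x) < \<rho>"
    proof -
      have "\<exists>d>0. \<forall>x\<in>cball 0 (Bu + 1). \<forall>x'\<in>cball 0 (Bu + 1). dist x' x < d \<longrightarrow> dist (f' x') (f' x) < \<rho>"
        using uc rho0 unfolding uniformly_continuous_on_def by blast
      then show ?thesis using that by blast
    qed
    have ev1: "\<forall>\<^sub>F \<kappa> in at 0. dist (\<epsilon>1 \<kappa>) 0 < min dU 1"
    proof -
      have "0 < min dU 1" using dU(1) by simp
      then show ?thesis by (rule tendstoD[OF eps1])
    qed
    have p6: "0 < min \<delta>1 (\<rho> / (6 * P))" using delta1 rho0 P by simp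
    have ev2: "\<forall>\<^sub>F \<kappa> in at 0. dist \<kappa> 0 < min \<delta>1 (\<rho> / (6 * P))"
      by (rule tendstoD[OF tendsto_ident_at p6])
    have ev3: "\<forall>\<^sub>F \<kappa> in at (0::real). \<kappa> \<noteq> 0" by (rule eventually_neq_at_within)
    show ?thesis
    proof (rule eventually_mono[OF eventually_conj[OF ev1 eventually_conj[OF ev2 ev3]]])
      fix \<kappa> :: real
      assume H: "dist (\<epsilon>1 \<kappa>) 0 < min dU 1 \<and> dist \<kappa> 0 < min \<delta>1 (\<rho> / (6 * P)) \<and> \<kappa> \<noteq> 0"
      have eps0: "\<bar>\<epsilon>1 \<kappa>\<bar> < min dU 1" using H by (simp add: dist_real_def)
      have eps: "\<epsilon>1 \<kappa> < min dU 1" by (rule le_less_trans[OF abs_ge_self eps0])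
      have kd: "0 < \<bar>\<kappa>\<bar> \<and> \<bar>\<kappa>\<bar> < \<delta>1" using H by (simp add: dist_real_def)
      have kP: "\<bar>\<kappa>\<bar> * P \<le> \<rho> / 6"
      proof -
        have "\<bar>\<kappa>\<bar> < \<rho> / (6 * P)" using H by (simp add: dist_real_def)
        then have "\<bar>\<kappa>\<bar> * (6 * P) < \<rho>" using P(1) by (simp add: less_divide_eq)
        then show ?thesis by (simp add: mult_ac)
      qed
      define ak where "ak = gK11 \<Psi> \<Psi>1 \<kappa>"
      define Vk where "Vk = (\<lambda>x. f' (U \<kappa> x))"
      have Us: "stationary_neumann l (gK11 \<Psi> \<Psi>1 \<kappa>) (g22 \<Psi>) f (U \<kappa>)" using U_stat kd by blast
      have Uc: "C2a l \<alpha> (\<lambda>x. U \<kappa> x - ug (fst x))" "C2a_norm l \<alpha> (\<lambda>x. U \<kappa> x - ug (fst x)) < \<epsilon>1 \<kappa>"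
        using U_close kd by blast+
      have cU: "continuous_on (fund l) (U \<kappa>)" using Us unfolding stationary_neumann_def by (blast intro: C2_cont)
      have cVk: "continuous_on (fund l) Vk"
        unfolding Vk_def by (rule continuous_on_compose2[OF f_C1(2) cU]) auto
      have close: "\<forall>x\<in>fund l. \<bar>U \<kappa> x - ug (fst x)\<bar> < min dU 1"
      proof
        fix x assume x: "x \<in> fund l"
        have "\<bar>U \<kappa> x - ug (fst x)\<bar> \<le> C2a_norm l \<alpha> (\<lambda>x. U \<kappa> x - ug (fst x))"
          using sup_le_norm[OF Uc(1), of x] x fund_sub_strip by auto
        then show "\<bar>U \<kappa> x - ug (fst x)\<bar> < min dU 1" using Uc(2) eps by linarith
      qed
      have VV: "\<forall>x\<in>fund l. \<bar>Vk x - V0 x\<bar> \<le> \<rho> \<and> \<bar>V0 x\<bar> + 1 \<le> C"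
      proof
        fix x assume x: "x \<in> fund l"
        have c1: "\<bar>U \<kappa> x - ug (fst x)\<bar> < min dU 1" using close x by blast
        have bx: "\<bar>ug (fst x)\<bar> \<le> Bu" using Bu(2) x by blast
        have "\<bar>ug (fst x)\<bar> \<le> Bu + 1" using bx by linarith
        then have u1: "ug (fst x) \<in> cball 0 (Bu + 1)" by (simp add: dist_real_def)
        have c1': "\<bar>U \<kappa> x - ug (fst x)\<bar> < 1" using c1 by simp
        have "\<bar>U \<kappa> x\<bar> \<le> \<bar>U \<kappa> x - ug (fst x)\<bar> + \<bar>ug (fst x)\<bar>"
          using abs_triangle_ineq[of "U \<kappa> x - ug (fst x)" "ug (fst x)"] by simp
        then have "\<bar>U \<kappa> x\<bar> \<le> Bu + 1" using c1' bx by linarith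
        then have u2: "U \<kappa> x \<in> cball 0 (Bu + 1)" by (simp add: dist_real_def)
        have "dist (U \<kappa> x) (ug (fst x)) < dU" using c1 by (simp add: dist_real_def)
        then have "dist (f' (U \<kappa> x)) (f' (ug (fst x))) < \<rho>" using dU(2) u1 u2 by blast
        then show "\<bar>Vk x - V0 x\<bar> \<le> \<rho> \<and> \<bar>V0 x\<bar> + 1 \<le> C"
          unfolding Vk_def V0_def C_def using Bv(2) x V0_def by (simp add: dist_real_def)
      qed
      have ratio: "\<forall>x\<in>fund l. 0 < a0 x \<and> 0 < ak x \<and> 0 < b x \<and> ak x \<le> (1 + \<rho>) * a0 x \<and> a0 x \<le> (1 + \<rho>) * ak x"
      proof
        fix x assume x: "x \<in> fund l"
        define y where "y = \<kappa> * \<Psi> (fst x) * cos (snd x)"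
        have "\<bar>y\<bar> \<le> \<bar>\<kappa>\<bar> * P"
        proof -
          have "\<bar>y\<bar> = \<bar>\<kappa>\<bar> * \<bar>\<Psi> (fst x)\<bar> * \<bar>cos (snd x)\<bar>" unfolding y_def by (simp add: abs_mult)
          also have "\<dots> \<le> \<bar>\<kappa>\<bar> * P * 1"
            using P(2) x by (intro mult_mono) (auto intro: mult_left_mono)
          finally show ?thesis by simp
        qed
        moreover have "\<bar>\<kappa>\<bar> * P \<le> 1" using kP rho1 by linarith
        ultimately have "\<bar>(y - 1)\<^sup>2 - 1\<bar> \<le> 3 * (\<bar>\<kappa>\<bar> * P)" by (rule y_bound)
        moreover have "ak x - a0 x = (y - 1)\<^sup>2 - 1" unfolding ak_def ak_eq a0_eq y_def by simp
        ultimately have "\<bar>ak x - a0 x\<bar> \<le> \<rho> / 2" using kP by linarith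
        then have "0 < ak x \<and> ak x \<le> (1 + \<rho>) * a0 x \<and> a0 x \<le> (1 + \<rho>) * ak x"
          using a_bounds[of "a0 x" "ak x" \<rho>] a0ge x rho0 rho1 by auto
        then show "0 < a0 x \<and> 0 < ak x \<and> 0 < b x \<and> ak x \<le> (1 + \<rho>) * a0 x \<and> a0 x \<le> (1 + \<rho>) * ak x"
          using a0ge bpos x by force
      qed
      have r1: "1 \<le> 1 + \<rho>" using rho0 by simp
      have c01: "cmp l a0 ak b (1 + \<rho>)" by (rule cmp_from_ratio[OF ratio r1])
      have c10: "cmp l ak a0 b (1 + \<rho>)" by (rule cmp_from_ratio[OF _ r1]) (use ratio in blast)
      have cak': "continuous_on (fund l) ak" unfolding ak_def by (rule cak)
      have est: "\<bar>principal_eig l ak b Vk - principal_eig l a0 b V0\<bar>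
         \<le> (((1 + \<rho>)\<^sup>2 * (1 + \<rho>) - 1) + (1 - (1 - \<rho>) / (1 + \<rho>)\<^sup>2)) * \<bar>principal_eig l a0 b V0 + C\<bar>"
        by (rule eig_compare[OF ca0 cak' cb cV0 cVk c01 c10 r1 _ rho1 VV]) (use rho0 in simp)
      have E: "((1 + \<rho>)\<^sup>2 * (1 + \<rho>) - 1) + (1 - (1 - \<rho>) / (1 + \<rho>)\<^sup>2) \<le> 10 * \<rho>"
        by (rule arith_E) (use rho0 rho1 in auto)
      have "\<bar>principal_eig l ak b Vk - L0\<bar> \<le> 10 * \<rho> * \<bar>L0 + C\<bar>"
        using est mult_right_mono[OF E abs_ge_zero[of "L0 + C"]] unfolding L0_def[symmetric] by linarith
      then show "dist (principal_eig l (gK11 \<Psi> \<Psi>1 \<kappa>) b (\<lambda>x. f' (U \<kappa> x))) L0 < e"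
        using rhoe unfolding ak_def Vk_def dist_real_def by linarith
    qed
  qed
  show ?thesis
    unfolding tendsto_iff using main unfolding L0_def a0_def b_def V0_def by blast
qed

end
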